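(* Let $G=A\times_\varphi K$ be a motion group such that $G$ acts regularly on $\widehat A$. Then for every $\mu\in M(G)$, the map $\alpha\mapsto\widehat\mu(\Lambda_\alpha)$ from $\widehat A$ to $\boldsymbol B(L^2(K))$ is uniformly continuous with respect to the operator norm topology.
   Context: Motion group: $G=A\times_\varphi K$, $A$ locally compact Abelian (pairing $\langle a,\alpha\rangle=\alpha(a)$), $K$ compact, $\varphi:K\to\mathrm{Aut}(A)$ a homomorphism with $(a,\kappa)\mapsto\varphi_\kappa(a)$ continuous, product $(a_1,\kappa_1)(a_2,\kappa_2)=(a_1+\varphi_{\kappa_1}(a_2),\kappa_1\kappa_2)$; $K$ acts on $\widehat A$ by $\varphi_\kappa(\alpha)=\alpha\circ\varphi_{\kappa^{-1}}$; regular action in Mackey's sense (Folland, p. 183). $\Lambda_\alpha$ on $L^2(K)$: $[\Lambda_\alpha(a,\kappa)\phi](\kappa')=\langle a,\varphi_{\kappa'}(\alpha)\rangle\phi(\kappa^{-1}\kappa')$. $\widehat\mu(U)=\int_G U(x^{-1})\,d\mu(x)$. Uniform continuity refers to the uniform structure of the locally compact Abelian group $\widehat A$: for each $\epsilon>0$ there is a neighborhood $V$ of $0$ with $\|\widehat\mu(\Lambda_\alpha)-\widehat\mu(\Lambda_\beta)\|<\epsilon$ whenever $\alpha-\beta\in V$. *)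

theory Defs
  imports "HOL-Analysis.Analysis" "HOL-Probability.Probability"
begin

text \<open>A is a locally compact Hausdorff abelian group
 (type 'a, additive notation), K a compact Hausdorff group (type 'k, written additively
 but NOT assumed commutative: class topological_group_add is non-commutative).\<close>

definition topological_automorphism :: "('a::topological_ab_group_add \<Rightarrow> 'a) \<Rightarrow> bool" where
  "topological_automorphism f \<longleftrightarrow>
     (\<forall>a b. f (a + b) = f a + f b) \<and> bij f \<and> homeomorphism UNIV UNIV f (inv f)"

definition motion_action :: "('k::topological_group_add \<Rightarrow> 'a::topological_ab_group_add \<Rightarrow> 'a) \<Rightarrow> bool" where
  "motion_action \<phi> \<longleftrightarrow>
     (\<forall>\<kappa>. topological_automorphism (\<phi> \<kappa>)) \<and>
     \<phi> 0 = id \<and> (\<forall>\<kappa>1 \<kappa>2. \<phi> (\<kappa>1 + \<kappa>2) = \<phi> \<kappa>1 \<circ> \<phi> \<kappa>2) \<and>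
     continuous_on UNIV (\<lambda>p::'a \<times> 'k. \<phi> (snd p) (fst p))"

definition sd_mult :: "('k::group_add \<Rightarrow> 'a::ab_group_add \<Rightarrow> 'a) \<Rightarrow> 'a \<times> 'k \<Rightarrow> 'a \<times> 'k \<Rightarrow> 'a \<times> 'k" where
  "sd_mult \<phi> x y = (fst x + \<phi> (snd x) (fst y), snd x + snd y)"

definition sd_inv :: "('k::group_add \<Rightarrow> 'a::ab_group_add \<Rightarrow> 'a) \<Rightarrow> 'a \<times> 'k \<Rightarrow> 'a \<times> 'k" where
  "sd_inv \<phi> x = (- \<phi> (- snd x) (fst x), - snd x)"

definition dual_group :: "('a::topological_ab_group_add \<Rightarrow> complex) set" where
  "dual_group = {\<alpha>. continuous_on UNIV \<alpha> \<and> (\<forall>a b. \<alpha> (a + b) = \<alpha> a * \<alpha> b) \<and> (\<forall>a. cmod (\<alpha> a) = 1)}"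

text \<open>Open sets of \<widehat>A for its (compact-open = compact convergence) topology.\<close>
definition dual_open :: "('a::topological_ab_group_add \<Rightarrow> complex) set \<Rightarrow> bool" where
  "dual_open U \<longleftrightarrow> U \<subseteq> dual_group \<and>
     (\<forall>\<alpha>\<in>U. \<exists>C \<delta>. compact C \<and> \<delta> > 0 \<and>
        {\<gamma>\<in>dual_group. \<forall>a\<in>C. cmod (\<gamma> a - \<alpha> a) < \<delta>} \<subseteq> U)"

definition dual_borel :: "('a::topological_ab_group_add \<Rightarrow> complex) set set" where
  "dual_borel = sigma_sets dual_group {U. dual_open U}"

definition dual_act :: "('k::group_add \<Rightarrow> 'a::ab_group_add \<Rightarrow> 'a) \<Rightarrow> 'k \<Rightarrow> ('a \<Rightarrow> complex) \<Rightarrow> ('a \<Rightarrow> complex)" where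
  "dual_act \<phi> \<kappa> \<alpha> = (\<lambda>a. \<alpha> (\<phi> (- \<kappa>) a))"

text \<open>Regular action in Mackey's sense (Folland): the orbit space is countably separated,
  i.e. there are countably many K-invariant Borel sets E_j in \<widehat>A such that every
  orbit is the intersection of those E_j that contain it.\<close>
definition regular_action :: "('k::topological_group_add \<Rightarrow> 'a::topological_ab_group_add \<Rightarrow> 'a) \<Rightarrow> bool" where
  "regular_action \<phi> \<longleftrightarrow>
     (\<exists>E :: nat \<Rightarrow> ('a \<Rightarrow> complex) set.
        (\<forall>j. E j \<in> dual_borel \<and> (\<forall>\<kappa>. \<forall>\<alpha>\<in>E j. dual_act \<phi> \<kappa> \<alpha> \<in> E j)) \<and>
        (\<forall>\<alpha>\<in>dual_group. range (\<lambda>\<kappa>. dual_act \<phi> \<kappa> \<alpha>) = dual_group \<inter> \<Inter>{E j |j. \<alpha> \<in> E j}))"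

definition radon_fin :: "'x::topological_space measure \<Rightarrow> bool" where
  "radon_fin \<nu> \<longleftrightarrow> sets \<nu> = sets borel \<and> finite_measure \<nu> \<and>
     (\<forall>E\<in>sets borel. emeasure \<nu> E = (SUP C\<in>{C. compact C \<and> C \<subseteq> E}. emeasure \<nu> C)) \<and>
     (\<forall>E\<in>sets borel. emeasure \<nu> E = (INF U\<in>{U. open U \<and> E \<subseteq> U}. emeasure \<nu> U))"

definition haar_prob :: "'k::topological_group_add measure \<Rightarrow> bool" where
  "haar_prob m \<longleftrightarrow> radon_fin m \<and> prob_space m \<and>
     (\<forall>\<kappa>. \<forall>E\<in>sets borel. emeasure m ((\<lambda>x. \<kappa> + x) -` E) = emeasure m E)"

text \<open>L^2(K) (functions, norms and inner products do not depend on the representative).\<close>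
definition L2 :: "'k measure \<Rightarrow> ('k \<Rightarrow> complex) set" where
  "L2 m = {f. f \<in> borel_measurable m \<and> integrable m (\<lambda>x. (cmod (f x))\<^sup>2)}"

definition l2_inner :: "'k measure \<Rightarrow> ('k \<Rightarrow> complex) \<Rightarrow> ('k \<Rightarrow> complex) \<Rightarrow> complex" where
  "l2_inner m f g = (\<integral>x. f x * cnj (g x) \<partial>m)"

definition l2_norm :: "'k measure \<Rightarrow> ('k \<Rightarrow> complex) \<Rightarrow> real" where
  "l2_norm m f = sqrt (\<integral>x. (cmod (f x))\<^sup>2 \<partial>m)"

definition Lambda :: "('k::group_add \<Rightarrow> 'a::ab_group_add \<Rightarrow> 'a) \<Rightarrow> ('a \<Rightarrow> complex) \<Rightarrow> 'a \<times> 'k \<Rightarrow> ('k \<Rightarrow> complex) \<Rightarrow> ('k \<Rightarrow> complex)" where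
  "Lambda \<phi> \<alpha> x f = (\<lambda>\<kappa>'. dual_act \<phi> \<kappa>' \<alpha> (fst x) * f (- snd x + \<kappa>'))"

text \<open>A complex measure mu \<in> M(G) is given as mu = h \<cdot> nu with nu a finite Radon measure
  and h bounded Borel.  \<widehat>mu(Lambda_alpha) = \<integral> Lambda_alpha(x^{-1}) d mu(x) as a weak
  operator integral: its sesquilinear form <\<widehat>mu(Lambda_alpha) f, g>.\<close>
definition ft_form :: "('k::group_add \<Rightarrow> 'a::ab_group_add \<Rightarrow> 'a) \<Rightarrow> 'k measure \<Rightarrow> ('a \<times> 'k) measure
    \<Rightarrow> ('a \<times> 'k \<Rightarrow> complex) \<Rightarrow> ('a \<Rightarrow> complex) \<Rightarrow> ('k \<Rightarrow> complex) \<Rightarrow> ('k \<Rightarrow> complex) \<Rightarrow> complex" where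
  "ft_form \<phi> m \<nu> h \<alpha> f g = (\<integral>x. h x * l2_inner m (Lambda \<phi> \<alpha> (sd_inv \<phi> x) f) g \<partial>\<nu>)"

text \<open>Operator norm of the bounded operator on L^2(K) with sesquilinear form B.\<close>
definition form_norm :: "'k measure \<Rightarrow> (('k \<Rightarrow> complex) \<Rightarrow> ('k \<Rightarrow> complex) \<Rightarrow> complex) \<Rightarrow> real" where
  "form_norm m B = (SUP p\<in>{(f, g). f \<in> L2 m \<and> g \<in> L2 m \<and> l2_norm m f \<le> 1 \<and> l2_norm m g \<le> 1}.
                      cmod (B (fst p) (snd p)))"

end

theory Submission
  imports Defs
begin

lemma radon_basic:
  fixes \<mu> :: "'x::t2_space measure"
  assumes "radon_fin \<mu>"
  shows "sets \<mu> = sets borel" "space \<mu> = UNIV" "finite_measure \<mu>"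
  using assms unfolding radon_fin_def by (auto dest: sets_eq_imp_space_eq)

lemma radon_inner:
  fixes \<mu> :: "'x::t2_space measure"
  assumes R: "radon_fin \<mu>" and A: "A \<in> sets borel" and e: "e > 0"
  shows "\<exists>C. compact C \<and> C \<subseteq> A \<and> measure \<mu> (A - C) < e"
proof -
  interpret finite_measure \<mu> using radon_basic[OF R] by simp
  have sb: "sets \<mu> = sets borel" using radon_basic[OF R] by simp
  show ?thesis
  proof (cases "measure \<mu> A < e")
    case True then show ?thesis by (intro exI[of _ "{}"]) auto
  next
    case False
    have "emeasure \<mu> A = (SUP C\<in>{C. compact C \<and> C \<subseteq> A}. emeasure \<mu> C)"
      using R A unfolding radon_fin_def by auto
    moreover have "ennreal (measure \<mu> A - e) < emeasure \<mu> A"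
      using False e by (simp add: emeasure_eq_measure ennreal_lessI)
    ultimately obtain C where C: "compact C" "C \<subseteq> A" "ennreal (measure \<mu> A - e) < emeasure \<mu> C"
      by (auto simp: less_SUP_iff)
    have Cs: "C \<in> sets \<mu>" using C(1) sb by (simp add: compact_imp_closed borel_closed)
    have As: "A \<in> sets \<mu>" using A sb by simp
    have "measure \<mu> A - e < measure \<mu> C"
      using C(3) False e by (simp add: emeasure_eq_measure ennreal_less_iff)
    moreover have "measure \<mu> (A - C) = measure \<mu> A - measure \<mu> C"
      using Cs As C(2) by (simp add: finite_measure_Diff)
    ultimately show ?thesis using C by auto
  qed
qed

lemma radon_outer:
  fixes \<mu> :: "'x::t2_space measure"
  assumes R: "radon_fin \<mu>" and A: "A \<in> sets borel" and e: "e > 0"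
  shows "\<exists>U. open U \<and> A \<subseteq> U \<and> measure \<mu> (U - A) < e"
proof -
  interpret finite_measure \<mu> using radon_basic[OF R] by simp
  have sb: "sets \<mu> = sets borel" using radon_basic[OF R] by simp
  have "emeasure \<mu> A = (INF U\<in>{U. open U \<and> A \<subseteq> U}. emeasure \<mu> U)"
    using R A unfolding radon_fin_def by auto
  moreover have "emeasure \<mu> A < ennreal (measure \<mu> A + e)"
    using e by (simp add: emeasure_eq_measure ennreal_lessI)
  ultimately obtain U where U: "open U" "A \<subseteq> U" "emeasure \<mu> U < ennreal (measure \<mu> A + e)"
    by (auto simp: INF_less_iff)
  have Us: "U \<in> sets \<mu>" using U(1) sb by simp
  have As: "A \<in> sets \<mu>" using A sb by simp
  have "ennreal (measure \<mu> U) < ennreal (measure \<mu> A + e)"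
    using U(3) by (simp add: emeasure_eq_measure del: ennreal_plus)
  then have "measure \<mu> U < measure \<mu> A + e"
    using e by (simp add: ennreal_less_iff del: ennreal_plus)
  moreover have "measure \<mu> (U - A) = measure \<mu> U - measure \<mu> A"
    using Us As U(2) by (simp add: finite_measure_Diff)
  ultimately show ?thesis using U by auto
qed

lemma radon_approx:
  fixes \<mu> :: "'x::t2_space measure"
  assumes R: "radon_fin \<mu>" and A: "A \<in> sets borel" and e: "e > 0"
  shows "\<exists>C U. compact C \<and> open U \<and> C \<subseteq> A \<and> A \<subseteq> U \<and> measure \<mu> (U - C) < e"
proof -
  interpret finite_measure \<mu> using radon_basic[OF R] by simp
  have sb: "sets \<mu> = sets borel" using radon_basic[OF R] by simp
  obtain C where C: "compact C" "C \<subseteq> A" "measure \<mu> (A - C) < e/2"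
    using radon_inner[OF R A, of "e/2"] e by auto
  obtain U where U: "open U" "A \<subseteq> U" "measure \<mu> (U - A) < e/2"
    using radon_outer[OF R A, of "e/2"] e by auto
  have Cs: "C \<in> sets \<mu>" using C(1) sb by (simp add: compact_imp_closed borel_closed)
  have As: "A \<in> sets \<mu>" using A sb by simp
  have Us: "U \<in> sets \<mu>" using U(1) sb by simp
  have "U - C = (U - A) \<union> (A - C)" using C U by auto
  then have "measure \<mu> (U - C) \<le> measure \<mu> (U - A) + measure \<mu> (A - C)"
    using Cs As Us by (simp add: measure_Un_le)
  then show ?thesis using C U by (intro exI[of _ C] exI[of _ U]) auto
qed

lemma open_vimage_UNIV: "continuous_on UNIV f \<Longrightarrow> open S \<Longrightarrow> open (f -` S)"
  using continuous_on_open_vimage[of UNIV f] by auto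

lemma shift_tube:
  fixes C U :: "'k::topological_group_add set"
  assumes "compact C" "open U" "C \<subseteq> U"
  shows "\<exists>W. open W \<and> 0 \<in> W \<and> (\<forall>w\<in>W. \<forall>c\<in>C. w + c \<in> U \<and> - w + c \<in> U)"
proof -
  let ?O = "(\<lambda>p::'k\<times>'k. fst p + snd p) -` U \<inter> (\<lambda>p. - fst p + snd p) -` U"
  have o: "open ?O"
    by (intro open_Int open_vimage_UNIV assms continuous_intros)
  have s: "{0} \<times> C \<subseteq> ?O" using assms by auto
  obtain X0 where "0 \<in> X0" "open X0" "X0 \<times> C \<subseteq> ?O"
    using Elementary_Topology.tube_lemma[OF assms(1) o s] by blast
  then show ?thesis by (intro exI[of _ X0]) auto
qed

lemma tube_unif:
  fixes \<Phi> :: "'p::topological_space \<times> 'k::topological_space \<Rightarrow> 'b::metric_space"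
  assumes K: "compact (UNIV :: 'k set)" and c: "continuous_on UNIV \<Phi>" and e: "e > 0"
  shows "\<exists>N. open N \<and> p0 \<in> N \<and> (\<forall>p\<in>N. \<forall>u. dist (\<Phi> (p, u)) (\<Phi> (p0, u)) < e)"
proof -
  let ?O = "(\<lambda>z. dist (\<Phi> z) (\<Phi> (p0, snd z))) -` {..<e}"
  have c2: "continuous_on UNIV (\<lambda>z::'p\<times>'k. \<Phi> (p0, snd z))"
    by (rule continuous_on_compose2[OF c]) (auto intro!: continuous_intros)
  have o: "open ?O"
    by (intro open_vimage_UNIV continuous_on_dist c c2) auto
  have s: "{p0} \<times> UNIV \<subseteq> ?O" using e by auto
  obtain X0 where X: "p0 \<in> X0" "open X0" "X0 \<times> UNIV \<subseteq> ?O"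
    using Elementary_Topology.tube_lemma[OF K o s] by blast
  have "dist (\<Phi> (p, u)) (\<Phi> (p0, u)) < e" if "p \<in> X0" for p u
    using subsetD[OF X(3), of "(p,u)"] that by auto
  then show ?thesis using X by blast
qed

lemma isCont_eps:
  fixes J :: "'p::t2_space \<Rightarrow> 'b::metric_space"
  assumes "\<And>e. e > 0 \<Longrightarrow> \<exists>N. open N \<and> p0 \<in> N \<and> (\<forall>p\<in>N. dist (J p) (J p0) < e)"
  shows "isCont J p0"
  unfolding continuous_at tendsto_iff
proof (intro allI impI)
  fix e :: real assume "e > 0"
  then obtain N where "open N" "p0 \<in> N" "\<forall>p\<in>N. dist (J p) (J p0) < e" using assms by blast
  then show "eventually (\<lambda>x. dist (J x) (J p0) < e) (at p0)"
    unfolding eventually_at_topological by blast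
qed

locale haarK =
  fixes m :: "'k::{topological_group_add, t2_space} measure"
  assumes H: "haar_prob m"
begin

lemma R: "radon_fin m" using H unfolding haar_prob_def by simp
lemma sets_m[measurable_cong]: "sets m = sets borel" using radon_basic[OF R] by simp
lemma space_m[simp]: "space m = UNIV" using radon_basic[OF R] by simp
lemma prob: "prob_space m" using H unfolding haar_prob_def by simp
sublocale prob_space m by (rule prob)

lemma inv_emeasure: "A \<in> sets borel \<Longrightarrow> emeasure m ((\<lambda>x. c + x) -` A) = emeasure m A"
  using H unfolding haar_prob_def by simp

lemma inv_measure: "A \<in> sets borel \<Longrightarrow> measure m ((\<lambda>x. c + x) -` A) = measure m A"
  using inv_emeasure by (simp add: measure_def)

lemma shift_borel: "(\<lambda>x::'k. c + x) \<in> borel_measurable borel"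
  by (intro borel_measurable_continuous_onI continuous_intros)

lemma shift_meas: "(\<lambda>x::'k. c + x) \<in> measurable m m"
  using shift_borel by (simp add: measurable_cong_sets[OF sets_m sets_m])

lemma distr_shift: "distr m m (\<lambda>x. c + x) = m"
proof (rule measure_eqI)
  fix A assume "A \<in> sets (distr m m (\<lambda>x. c + x))"
  then have A: "A \<in> sets borel" by (simp add: sets_m)
  show "emeasure (distr m m (\<lambda>x. c + x)) A = emeasure m A"
    using A shift_meas by (simp add: emeasure_distr sets_m inv_emeasure)
qed simp

lemma bm_m: "f \<in> borel_measurable m \<longleftrightarrow> f \<in> borel_measurable borel"
  by (simp add: measurable_cong_sets[OF sets_m refl])

lemma shift_fun_meas: "F \<in> borel_measurable m \<Longrightarrow> (\<lambda>x. F (c + x)) \<in> borel_measurable m"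
  using measurable_comp[OF shift_meas, of F borel] by (simp add: o_def)

lemma int_shift:
  fixes F :: "'k \<Rightarrow> 'b::{banach, second_countable_topology}"
  assumes "F \<in> borel_measurable m"
  shows "(\<integral>x. F (c + x) \<partial>m) = integral\<^sup>L m F"
  using integral_distr[OF shift_meas assms, of c] by (simp add: distr_shift)

lemma integrable_shift:
  fixes F :: "'k \<Rightarrow> 'b::{banach, second_countable_topology}"
  assumes "F \<in> borel_measurable m"
  shows "integrable m (\<lambda>x. F (c + x)) \<longleftrightarrow> integrable m F"
  using integrable_distr_eq[OF shift_meas assms, of c] by (simp add: distr_shift)

end

definition cont2 :: "'k::topological_group_add measure \<Rightarrow> ('k \<Rightarrow> complex) \<Rightarrow> bool" where
  "cont2 m f \<longleftrightarrow> (\<forall>e>0. \<exists>W. open W \<and> 0 \<in> W \<and> (\<forall>w\<in>W. (\<integral>v. (cmod (f (w+v) - f v))\<^sup>2 \<partial>m) < e))"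

definition bnd :: "('k::topological_space \<Rightarrow> complex) \<Rightarrow> bool" where
  "bnd f \<longleftrightarrow> f \<in> borel_measurable borel \<and> (\<exists>B. \<forall>x. cmod (f x) \<le> B)"

lemma sq_tri2: "(cmod (a + b))\<^sup>2 \<le> 2 * (cmod a)\<^sup>2 + 2 * (cmod b)\<^sup>2"
proof -
  have "cmod (a + b) \<le> cmod a + cmod b" by (rule norm_triangle_ineq)
  then have "(cmod (a + b))\<^sup>2 \<le> (cmod a + cmod b)\<^sup>2" by (simp add: power_mono)
  also have "\<dots> \<le> 2 * (cmod a)\<^sup>2 + 2 * (cmod b)\<^sup>2"
  proof -
    have "0 \<le> (cmod a - cmod b)\<^sup>2" by simp
    then show ?thesis unfolding power2_diff power2_sum by linarith
  qed
  finally show ?thesis .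
qed

lemma sq_tri3: "(cmod (a + b + c))\<^sup>2 \<le> 3 * ((cmod a)\<^sup>2 + (cmod b)\<^sup>2 + (cmod c)\<^sup>2)"
proof -
  have "cmod (a + b + c) \<le> cmod a + cmod b + cmod c"
    using norm_triangle_ineq[of "a+b" c] norm_triangle_ineq[of a b] by linarith
  then have "(cmod (a + b + c))\<^sup>2 \<le> (cmod a + cmod b + cmod c)\<^sup>2" by (simp add: power_mono)
  also have "\<dots> \<le> 3 * ((cmod a)\<^sup>2 + (cmod b)\<^sup>2 + (cmod c)\<^sup>2)"
  proof -
    have "0 \<le> (cmod a - cmod b)\<^sup>2 + (cmod b - cmod c)\<^sup>2 + (cmod a - cmod c)\<^sup>2" by simp
    then show ?thesis by (simp add: power2_eq_square algebra_simps)
  qed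
  finally show ?thesis .
qed

context haarK begin

lemma bnd_meas: "bnd f \<Longrightarrow> f \<in> borel_measurable m"
  unfolding bnd_def by (simp add: bm_m)

lemma bnd_diff_int:
  assumes "bnd f"
  shows "integrable m (\<lambda>v. (cmod (f (w+v) - f v))\<^sup>2)"
proof -
  obtain B where B: "\<And>x. cmod (f x) \<le> B" using assms unfolding bnd_def by auto
  have fm: "f \<in> borel_measurable m" using bnd_meas[OF assms] .
  have fm2: "(\<lambda>v. f (w + v)) \<in> borel_measurable m" using shift_fun_meas[OF fm] .
  show ?thesis
  proof (rule integrable_const_bound[where B="(2*B)^2"])
    show "AE x in m. norm ((cmod (f (w + x) - f x))\<^sup>2) \<le> (2 * B)\<^sup>2"
    proof (intro AE_I2)
      fix x
      have "cmod (f (w + x) - f x) \<le> 2 * B"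
        using norm_triangle_ineq4[of "f (w+x)" "f x"] B[of "w+x"] B[of x] by linarith
      then have "(cmod (f (w + x) - f x))\<^sup>2 \<le> (2 * B)\<^sup>2"
        by (rule power_mono[OF _ norm_ge_zero])
      then show "norm ((cmod (f (w + x) - f x))\<^sup>2) \<le> (2 * B)\<^sup>2"
        by simp
    qed
    show "(\<lambda>v. (cmod (f (w + v) - f v))\<^sup>2) \<in> borel_measurable m"
    proof -
      have d: "(\<lambda>v. f (w+v) - f v) \<in> borel_measurable m" by (rule borel_measurable_diff[OF fm2 fm])
      have "(\<lambda>v. cmod (f (w+v) - f v)) \<in> borel_measurable m" by (rule measurable_compose[OF d borel_measurable_norm])
      then show ?thesis by (rule borel_measurable_power)
    qed
  qed
qed

lemma ind_cont:
  assumes A: "A \<in> sets borel" and e: "e > 0"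
  shows "\<exists>W. open W \<and> 0 \<in> W \<and> (\<forall>w\<in>W. measure m {v. (w+v \<in> A) \<noteq> (v \<in> A)} < e)"
proof -
  obtain C U where CU: "compact C" "open U" "C \<subseteq> A" "A \<subseteq> U" "measure m (U - C) < e/4"
    using radon_approx[OF R A, of "e/4"] e by auto
  obtain W where W: "open W" "0 \<in> W" "\<And>w c. w \<in> W \<Longrightarrow> c \<in> C \<Longrightarrow> w + c \<in> U \<and> - w + c \<in> U"
  proof -
    have "C \<subseteq> U" using CU(3,4) by (rule subset_trans)
    from shift_tube[OF CU(1) CU(2) this] show ?thesis using that by blast
  qed
  have Cb: "C \<in> sets borel" using CU(1) by (simp add: compact_imp_closed borel_closed)
  have Ub: "U \<in> sets borel" using CU(2) by simp
  have pre: "(\<lambda>v. w + v) -` X \<in> sets borel" if "X \<in> sets borel" for X and w :: 'k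
    using measurable_sets[OF shift_borel[of w] that] by simp
  have mono: "measure m (A - C) \<le> measure m (U - C)"
    using CU Cb Ub A by (intro finite_measure_mono) (auto simp: sets_m)
  have "measure m {v. (w+v \<in> A) \<noteq> (v \<in> A)} < e" if w: "w \<in> W" for w
  proof -
    let ?P1 = "(\<lambda>v. w + v) -` (A - C)" and ?P2 = "(\<lambda>v. w + v) -` (U - C)"
    have sub: "{v. (w+v \<in> A) \<noteq> (v \<in> A)} \<subseteq> ((?P1 \<union> (U - C)) \<union> (A - C)) \<union> ?P2"
    proof
      fix v assume v: "v \<in> {v. (w+v \<in> A) \<noteq> (v \<in> A)}"
      show "v \<in> ((?P1 \<union> (U - C)) \<union> (A - C)) \<union> ?P2"
      proof (cases "w + v \<in> A")
        case True
        then have "v \<notin> A" using v by auto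
        show ?thesis
        proof (cases "w + v \<in> C")
          case True
          then have "- w + (w + v) \<in> U" using W(3)[OF w] by blast
          then have "v \<in> U" by (simp add: add.assoc[symmetric])
          then show ?thesis using \<open>v \<notin> A\<close> CU(3) by auto
        next
          case False then show ?thesis using \<open>w + v \<in> A\<close> by auto
        qed
      next
        case False
        then have "v \<in> A" using v by auto
        show ?thesis
        proof (cases "v \<in> C")
          case True
          then have "w + v \<in> U" using W(3)[OF w] by blast
          then show ?thesis using False CU(3) by auto
        qed (use \<open>v \<in> A\<close> in auto)
      qed
    qed
    have s1: "?P1 \<in> sets m" "?P2 \<in> sets m" "U - C \<in> sets m" "A - C \<in> sets m"
      using pre A Cb Ub by (auto simp: sets_m)
    have Ds: "{v. (w+v \<in> A) \<noteq> (v \<in> A)} \<in> sets m"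
    proof -
      have "{v. (w+v \<in> A) \<noteq> (v \<in> A)} = ((\<lambda>v. w + v) -` A - A) \<union> (A - (\<lambda>v. w + v) -` A)" by auto
      then show ?thesis using pre[OF A, of w] A by (simp add: sets_m)
    qed
    have "measure m {v. (w+v \<in> A) \<noteq> (v \<in> A)} \<le> measure m (((?P1 \<union> (U - C)) \<union> (A - C)) \<union> ?P2)"
      using sub Ds s1 by (intro finite_measure_mono) auto
    also have "\<dots> \<le> measure m ?P1 + measure m (U - C) + measure m (A - C) + measure m ?P2"
    proof -
      have u1: "measure m (?P1 \<union> (U - C)) \<le> measure m ?P1 + measure m (U - C)"
        by (rule measure_Un_le) (use s1 in auto)
      have u2: "measure m ((?P1 \<union> (U - C)) \<union> (A - C)) \<le> measure m (?P1 \<union> (U - C)) + measure m (A - C)"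
        by (rule measure_Un_le) (use s1 in auto)
      have u3: "measure m (((?P1 \<union> (U - C)) \<union> (A - C)) \<union> ?P2) \<le> measure m ((?P1 \<union> (U - C)) \<union> (A - C)) + measure m ?P2"
        by (rule measure_Un_le) (use s1 in auto)
      show ?thesis using u1 u2 u3 by linarith
    qed
    also have "measure m ?P1 = measure m (A - C)" using A Cb by (intro inv_measure) auto
    also have "measure m ?P2 = measure m (U - C)" using Ub Cb by (intro inv_measure) auto
    finally show ?thesis using mono CU(5) by linarith
  qed
  then show ?thesis using W by blast
qed

lemma cont2_ind:
  assumes A: "A \<in> sets borel"
  shows "cont2 m (\<lambda>v. indicator A v *\<^sub>R c)"
  unfolding cont2_def
proof (intro allI impI)
  fix e :: real assume e: "e > 0"
  let ?c = "(cmod c)\<^sup>2"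
  obtain W where W: "open W" "0 \<in> W" "\<And>w. w \<in> W \<Longrightarrow> measure m {v. (w+v \<in> A) \<noteq> (v \<in> A)} < e / (?c + 1)"
  proof -
    have "?c + 1 > 0" by (simp add: add_nonneg_pos)
    then have "e / (?c + 1) > 0" using e by (intro divide_pos_pos)
    from ind_cont[OF A this] show ?thesis using that by blast
  qed
  have "(\<integral>v. (cmod (indicator A (w + v) *\<^sub>R c - indicator A v *\<^sub>R c))\<^sup>2 \<partial>m) < e" if w: "w \<in> W" for w
  proof -
    let ?D = "{v. (w+v \<in> A) \<noteq> (v \<in> A)}"
    have eq: "(cmod (indicator A (w + v) *\<^sub>R c - indicator A v *\<^sub>R c))\<^sup>2 = ?c * indicator ?D v" for v
      by (cases "w + v \<in> A"; cases "v \<in> A") simp_all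
    have "(\<integral>v. (cmod (indicator A (w + v) *\<^sub>R c - indicator A v *\<^sub>R c))\<^sup>2 \<partial>m) = ?c * measure m ?D"
      unfolding eq by simp
    also have "\<dots> \<le> ?c * (e / (?c + 1))"
      using W(3)[OF w] by (intro mult_left_mono) auto
    also have "\<dots> < e"
    proof -
      have p: "?c + 1 > 0" by (simp add: add_nonneg_pos)
      have "?c * (e / (?c + 1)) = e * (?c / (?c + 1))" by simp
      also have "\<dots> < e * 1" using p e by (intro mult_strict_left_mono) (simp_all add: divide_less_eq)
      finally show ?thesis by simp
    qed
    finally show ?thesis .
  qed
  then show "\<exists>W. open W \<and> 0 \<in> W \<and> (\<forall>w\<in>W. (\<integral>v. (cmod (indicator A (w + v) *\<^sub>R c - indicator A v *\<^sub>R c))\<^sup>2 \<partial>m) < e)"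
    using W by blast
qed

lemma bnd_ind: "A \<in> sets borel \<Longrightarrow> bnd (\<lambda>v. indicator A v *\<^sub>R (c::complex))"
  unfolding bnd_def
  by (auto intro!: exI[of _ "cmod c"] simp: indicator_def)

lemma bnd_add:
  assumes "bnd f" "bnd g" shows "bnd (\<lambda>x. f x + g x)"
proof -
  obtain B1 B2 where B: "\<And>x. cmod (f x) \<le> B1" "\<And>x. cmod (g x) \<le> B2"
    and M: "f \<in> borel_measurable borel" "g \<in> borel_measurable borel"
    using assms unfolding bnd_def by blast
  have "cmod (f x + g x) \<le> B1 + B2" for x
    using norm_triangle_ineq[of "f x" "g x"] B[of x] by linarith
  then show ?thesis unfolding bnd_def using M by auto
qed

lemma cont2_add:
  assumes bf: "bnd f" and bg: "bnd g" and cf: "cont2 m f" and cg: "cont2 m g"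
  shows "cont2 m (\<lambda>x. f x + g x)"
  unfolding cont2_def
proof (intro allI impI)
  fix e :: real assume e: "e > 0"
  obtain W1 where W1: "open W1" "0 \<in> W1" "\<And>w. w \<in> W1 \<Longrightarrow> (\<integral>v. (cmod (f (w+v) - f v))\<^sup>2 \<partial>m) < e/4"
  proof -
    have "e/4 > 0" using e by simp
    from cf[unfolded cont2_def, rule_format, OF this] show ?thesis using that by blast
  qed
  obtain W2 where W2: "open W2" "0 \<in> W2" "\<And>w. w \<in> W2 \<Longrightarrow> (\<integral>v. (cmod (g (w+v) - g v))\<^sup>2 \<partial>m) < e/4"
  proof -
    have "e/4 > 0" using e by simp
    from cg[unfolded cont2_def, rule_format, OF this] show ?thesis using that by blast
  qed
  have "(\<integral>v. (cmod ((f (w+v) + g (w+v)) - (f v + g v)))\<^sup>2 \<partial>m) < e" if w: "w \<in> W1 \<inter> W2" for w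
  proof -
    have "(\<integral>v. (cmod ((f (w+v) + g (w+v)) - (f v + g v)))\<^sup>2 \<partial>m)
        \<le> (\<integral>v. 2 * (cmod (f (w+v) - f v))\<^sup>2 + 2 * (cmod (g (w+v) - g v))\<^sup>2 \<partial>m)"
    proof (rule integral_mono')
      show "integrable m (\<lambda>v. 2 * (cmod (f (w+v) - f v))\<^sup>2 + 2 * (cmod (g (w+v) - g v))\<^sup>2)"
        using bnd_diff_int[OF bf] bnd_diff_int[OF bg] by auto
      fix v
      have "(f (w+v) + g (w+v)) - (f v + g v) = (f (w+v) - f v) + (g (w+v) - g v)" by simp
      show "(cmod ((f (w+v) + g (w+v)) - (f v + g v)))\<^sup>2 \<le> 2 * (cmod (f (w+v) - f v))\<^sup>2 + 2 * (cmod (g (w+v) - g v))\<^sup>2"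
        unfolding \<open>(f (w+v) + g (w+v)) - (f v + g v) = (f (w+v) - f v) + (g (w+v) - g v)\<close> by (rule sq_tri2)
    qed simp
    also have "\<dots> = 2 * (\<integral>v. (cmod (f (w+v) - f v))\<^sup>2 \<partial>m) + 2 * (\<integral>v. (cmod (g (w+v) - g v))\<^sup>2 \<partial>m)"
      using bnd_diff_int[OF bf] bnd_diff_int[OF bg] by simp
    also have "\<dots> < e" using W1(3)[of w] W2(3)[of w] w by auto
    finally show ?thesis .
  qed
  then show "\<exists>W. open W \<and> 0 \<in> W \<and> (\<forall>w\<in>W. (\<integral>v. (cmod ((f (w+v) + g (w+v)) - (f v + g v)))\<^sup>2 \<partial>m) < e)"
    using W1 W2 by (intro exI[of _ "W1 \<inter> W2"]) auto
qed

lemma cont2_sum: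
  assumes "finite S"
  shows "(\<forall>y\<in>S. A y \<in> sets borel) \<Longrightarrow> cont2 m (\<lambda>x. \<Sum>y\<in>S. indicator (A y) x *\<^sub>R c y) \<and> bnd (\<lambda>x. \<Sum>y\<in>S. indicator (A y) x *\<^sub>R (c y :: complex))"
  using assms
proof (induction S rule: finite_induct)
  case empty
  have "cont2 m (\<lambda>x. 0)" unfolding cont2_def by (intro allI impI exI[of _ UNIV]) simp
  moreover have "bnd (\<lambda>x::'k. 0::complex)" unfolding bnd_def by (auto intro: exI[of _ 0])
  ultimately show ?case by simp
next
  case (insert y S)
  let ?F = "\<lambda>x. \<Sum>y\<in>S. indicator (A y) x *\<^sub>R (c y :: complex)"
  have IH: "cont2 m ?F" "bnd ?F" using insert by auto
  have Ay: "A y \<in> sets borel" using insert by auto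
  have eq: "(\<lambda>x. \<Sum>y\<in>insert y S. indicator (A y) x *\<^sub>R c y) = (\<lambda>x. indicator (A y) x *\<^sub>R c y + ?F x)"
    by (simp only: sum.insert[OF insert.hyps])
  show ?case unfolding eq
    using cont2_add[OF bnd_ind[OF Ay] IH(2) cont2_ind[OF Ay] IH(1)] bnd_add[OF bnd_ind[OF Ay] IH(2)] by simp
qed

lemma cont2_simple:
  assumes s: "simple_function m s"
  shows "cont2 m s \<and> bnd s"
proof -
  have eq: "s = (\<lambda>x. \<Sum>y\<in>s ` space m. indicator (s -` {y} \<inter> space m) x *\<^sub>R y)"
  proof
    fix x show "s x = (\<Sum>y\<in>s ` space m. indicator (s -` {y} \<inter> space m) x *\<^sub>R y)"
      by (rule simple_function_indicator_representation_banach[OF s]) simp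
  qed
  have "finite (s ` space m)" using simple_functionD(1)[OF s] .
  moreover have "\<forall>y\<in>s ` space m. s -` {y} \<inter> space m \<in> sets borel"
    unfolding sets_m[symmetric] using simple_functionD(2)[OF s] by blast
  ultimately have R: "cont2 m (\<lambda>x. \<Sum>y\<in>s ` space m. indicator (s -` {y} \<inter> space m) x *\<^sub>R y) \<and>
      bnd (\<lambda>x. \<Sum>y\<in>s ` space m. indicator (s -` {y} \<inter> space m) x *\<^sub>R y)"
    using cont2_sum[of "s ` space m" "\<lambda>y. s -` {y} \<inter> space m" "\<lambda>y. y"] by blast
  show ?thesis using R by (simp only: eq[symmetric])
qed

end

lemma amgm_t:
  fixes x y t :: real
  assumes "t > 0"
  shows "x * y \<le> (t * x\<^sup>2 + y\<^sup>2 / t) / 2"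
proof -
  have "0 \<le> (t*x - y)\<^sup>2 / t" using assms by simp
  moreover have "(t*x - y)\<^sup>2 / t = t * x\<^sup>2 + y\<^sup>2 / t - 2 * (x * y)"
    using assms by (simp add: field_simps power2_eq_square)
  ultimately have "2 * (x * y) \<le> t * x\<^sup>2 + y\<^sup>2 / t" by linarith
  then show ?thesis by (simp add: field_simps)
qed

lemma cnj_borel: "(\<lambda>z::complex. cnj z) \<in> borel_measurable borel"
  by (intro borel_measurable_continuous_onI continuous_intros)

context haarK begin

lemma prod_bound:
  fixes F G \<Psi> :: "'k \<Rightarrow> complex"
  assumes Fm: "F \<in> borel_measurable m" and Gm: "G \<in> borel_measurable m" and Pm: "\<Psi> \<in> borel_measurable m"
    and Fi: "integrable m (\<lambda>u. (cmod (F u))\<^sup>2)" and Gi: "integrable m (\<lambda>u. (cmod (G u))\<^sup>2)"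
    and Pb: "\<And>u. cmod (\<Psi> u) \<le> B" and t: "t > 0"
  shows "integrable m (\<lambda>u. \<Psi> u * F u * cnj (G u))"
    and "cmod (\<integral>u. \<Psi> u * F u * cnj (G u) \<partial>m) \<le> B * (t * (\<integral>u. (cmod (F u))\<^sup>2 \<partial>m) + (\<integral>u. (cmod (G u))\<^sup>2 \<partial>m) / t) / 2"
proof -
  have B0: "0 \<le> B" using Pb[of undefined] norm_ge_zero order_trans by blast
  let ?b = "\<lambda>u. B * (t * (cmod (F u))\<^sup>2 + (cmod (G u))\<^sup>2 / t) / 2"
  have pw: "cmod (\<Psi> u * F u * cnj (G u)) \<le> ?b u" for u
  proof -
    have "cmod (\<Psi> u * F u * cnj (G u)) = cmod (\<Psi> u) * (cmod (F u) * cmod (G u))"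
      by (simp add: norm_mult)
    also have "\<dots> \<le> B * (cmod (F u) * cmod (G u))"
      by (intro mult_right_mono Pb) simp
    also have "\<dots> \<le> B * ((t * (cmod (F u))\<^sup>2 + (cmod (G u))\<^sup>2 / t) / 2)"
      by (intro mult_left_mono amgm_t t B0)
    finally show ?thesis by simp
  qed
  have bi: "integrable m ?b" using Fi Gi by simp
  have cG: "(\<lambda>u. cnj (G u)) \<in> borel_measurable m" by (rule measurable_compose[OF Gm cnj_borel])
  have pm: "(\<lambda>u. \<Psi> u * F u * cnj (G u)) \<in> borel_measurable m"
    by (intro borel_measurable_times Pm Fm cG)
  show I: "integrable m (\<lambda>u. \<Psi> u * F u * cnj (G u))"
  proof (rule Bochner_Integration.integrable_bound[OF bi pm])
    show "AE x in m. norm (\<Psi> x * F x * cnj (G x)) \<le> norm (?b x)"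
    proof (intro AE_I2)
      fix x
      have "0 \<le> ?b x" using B0 t by (intro mult_nonneg_nonneg divide_nonneg_nonneg add_nonneg_nonneg) auto
      then show "norm (\<Psi> x * F x * cnj (G x)) \<le> norm (?b x)" using pw[of x] by simp
    qed
  qed
  have "cmod (\<integral>u. \<Psi> u * F u * cnj (G u) \<partial>m) \<le> (\<integral>u. cmod (\<Psi> u * F u * cnj (G u)) \<partial>m)"
    by (rule integral_norm_bound)
  also have "\<dots> \<le> (\<integral>u. ?b u \<partial>m)"
    by (rule integral_mono') (use bi pw B0 t in auto)
  also have "\<dots> = B * (t * (\<integral>u. (cmod (F u))\<^sup>2 \<partial>m) + (\<integral>u. (cmod (G u))\<^sup>2 \<partial>m) / t) / 2"
    using Fi Gi by simp
  finally show "cmod (\<integral>u. \<Psi> u * F u * cnj (G u) \<partial>m) \<le> B * (t * (\<integral>u. (cmod (F u))\<^sup>2 \<partial>m) + (\<integral>u. (cmod (G u))\<^sup>2 \<partial>m) / t) / 2" .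
qed

lemma sq_norm_meas: "F \<in> borel_measurable m \<Longrightarrow> (\<lambda>u. (cmod (F u))\<^sup>2) \<in> borel_measurable m"
  by (intro borel_measurable_power measurable_compose[OF _ borel_measurable_norm])

lemma diff_sq_int:
  fixes F G :: "'k \<Rightarrow> complex"
  assumes Fm: "F \<in> borel_measurable m" and Gm: "G \<in> borel_measurable m"
    and Fi: "integrable m (\<lambda>u. (cmod (F u))\<^sup>2)" and Gi: "integrable m (\<lambda>u. (cmod (G u))\<^sup>2)"
  shows "integrable m (\<lambda>u. (cmod (F u - G u))\<^sup>2)"
proof (rule Bochner_Integration.integrable_bound)
  show "integrable m (\<lambda>u. 2 * (cmod (F u))\<^sup>2 + 2 * (cmod (- G u))\<^sup>2)" using Fi Gi by simp
  show "(\<lambda>u. (cmod (F u - G u))\<^sup>2) \<in> borel_measurable m"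
    by (intro sq_norm_meas borel_measurable_diff Fm Gm)
  show "AE x in m. norm ((cmod (F x - G x))\<^sup>2) \<le> norm (2 * (cmod (F x))\<^sup>2 + 2 * (cmod (- G x))\<^sup>2)"
  proof (intro AE_I2)
    fix x
    have "(cmod (F x - G x))\<^sup>2 \<le> 2 * (cmod (F x))\<^sup>2 + 2 * (cmod (- G x))\<^sup>2"
      using sq_tri2[of "F x" "- G x"] by simp
    then show "norm ((cmod (F x - G x))\<^sup>2) \<le> norm (2 * (cmod (F x))\<^sup>2 + 2 * (cmod (- G x))\<^sup>2)"
      by simp
  qed
qed

end

context haarK begin

lemma cont2_L2:
  assumes fm: "f \<in> borel_measurable m" and fi: "integrable m (\<lambda>x. (cmod (f x))\<^sup>2)"
  shows "cont2 m f"
proof -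
  obtain s where s0: "(\<forall>i. simple_function m (s i)) \<and> (\<forall>x\<in>space m. (\<lambda>i. s i x) \<longlonglongrightarrow> f x) \<and>
      (\<forall>i. \<forall>x\<in>space m. dist (s i x) 0 \<le> 2 * dist (f x) 0)"
    using borel_measurable_implies_sequence_metric[OF fm, of 0] by blast
  have ss: "\<And>i. simple_function m (s i)" using s0 by blast
  have sl: "\<And>x. (\<lambda>i. s i x) \<longlonglongrightarrow> f x" using s0 by simp
  have sb: "\<And>i x. cmod (s i x) \<le> 2 * cmod (f x)" using s0 by simp
  have sm: "\<And>i. s i \<in> borel_measurable m" by (rule borel_measurable_simple_function[OF ss])
  define r where "r i x = (cmod (s i x - f x))\<^sup>2" for i x
  have rm: "\<And>i. r i \<in> borel_measurable m"
    unfolding r_def by (intro sq_norm_meas borel_measurable_diff sm fm)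
  have rb: "norm (r i x) \<le> 9 * (cmod (f x))\<^sup>2" for i x
  proof -
    have "cmod (s i x - f x) \<le> 3 * cmod (f x)"
      using norm_triangle_ineq4[of "s i x" "f x"] sb[of i x] by linarith
    then have "(cmod (s i x - f x))\<^sup>2 \<le> (3 * cmod (f x))\<^sup>2" by (rule power_mono[OF _ norm_ge_zero])
    then show ?thesis unfolding r_def by (simp add: power_mult_distrib)
  qed
  have rl: "(\<lambda>i. r i x) \<longlonglongrightarrow> 0" for x
  proof -
    have "(\<lambda>i. (cmod (s i x - f x))\<^sup>2) \<longlonglongrightarrow> (cmod (f x - f x))\<^sup>2"
      by (intro tendsto_intros sl)
    then show ?thesis unfolding r_def by simp
  qed
  have wi: "integrable m (\<lambda>x. 9 * (cmod (f x))\<^sup>2)" using fi by simp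
  have rlim: "(\<lambda>i. integral\<^sup>L m (r i)) \<longlonglongrightarrow> integral\<^sup>L m (\<lambda>x. 0::real)"
    by (rule integral_dominated_convergence[OF _ rm wi]) (use rl rb in auto)
  have ri: "\<And>i. integrable m (r i)"
    by (rule integrable_dominated_convergence2[where f="\<lambda>x. 0::real", OF _ rm wi]) (use rl rb in auto)
  show ?thesis unfolding cont2_def
  proof (intro allI impI)
    fix e :: real assume e: "e > 0"
    have "eventually (\<lambda>i. integral\<^sup>L m (r i) < e/12) sequentially"
      using order_tendstoD(2)[OF rlim, of "e/12"] e by simp
    then obtain N where N: "integral\<^sup>L m (r N) < e/12"
      unfolding eventually_sequentially by blast
    have cs: "cont2 m (s N)" and bs: "bnd (s N)" using cont2_simple[OF ss] by auto
    have "e/6 > 0" using e by simp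
    from cs[unfolded cont2_def, rule_format, OF this] obtain W where
      W: "open W" "0 \<in> W" "\<And>w. w \<in> W \<Longrightarrow> (\<integral>v. (cmod (s N (w+v) - s N v))\<^sup>2 \<partial>m) < e/6"
      by blast
    have "(\<integral>v. (cmod (f (w+v) - f v))\<^sup>2 \<partial>m) < e" if w: "w \<in> W" for w
    proof -
      have rsh: "integrable m (\<lambda>v. r N (w + v))" using integrable_shift[OF rm] ri by simp
      have rsh2: "(\<integral>v. r N (w + v) \<partial>m) = integral\<^sup>L m (r N)" using int_shift[OF rm] by simp
      have di: "integrable m (\<lambda>v. (cmod (s N (w+v) - s N v))\<^sup>2)" by (rule bnd_diff_int[OF bs])
      have "(\<integral>v. (cmod (f (w+v) - f v))\<^sup>2 \<partial>m)
          \<le> (\<integral>v. 3 * r N (w + v) + 3 * (cmod (s N (w+v) - s N v))\<^sup>2 + 3 * r N v \<partial>m)"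
      proof (rule integral_mono')
        show "integrable m (\<lambda>v. 3 * r N (w + v) + 3 * (cmod (s N (w+v) - s N v))\<^sup>2 + 3 * r N v)"
          using rsh di ri by auto
        fix v
        have eq: "f (w+v) - f v = (f (w+v) - s N (w+v)) + (s N (w+v) - s N v) + (s N v - f v)" by simp
        have "(cmod (f (w+v) - f v))\<^sup>2 \<le> 3 * ((cmod (f (w+v) - s N (w+v)))\<^sup>2 + (cmod (s N (w+v) - s N v))\<^sup>2 + (cmod (s N v - f v))\<^sup>2)"
          unfolding eq by (rule sq_tri3)
        moreover have "cmod (f (w+v) - s N (w+v)) = cmod (s N (w+v) - f (w+v))" by (rule norm_minus_commute)
        ultimately show "(cmod (f (w+v) - f v))\<^sup>2 \<le> 3 * r N (w + v) + 3 * (cmod (s N (w+v) - s N v))\<^sup>2 + 3 * r N v"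
          unfolding r_def by simp
      qed (simp add: r_def)
      also have "\<dots> = 3 * (\<integral>v. r N (w + v) \<partial>m) + 3 * (\<integral>v. (cmod (s N (w+v) - s N v))\<^sup>2 \<partial>m) + 3 * integral\<^sup>L m (r N)"
        using rsh di ri by simp
      also have "\<dots> < e" using rsh2 N W(3)[OF w] by simp
      finally show ?thesis .
    qed
    then show "\<exists>W. open W \<and> 0 \<in> W \<and> (\<forall>w\<in>W. (\<integral>v. (cmod (f (w+v) - f v))\<^sup>2 \<partial>m) < e)"
      using W by blast
  qed
qed

end

context haarK begin

lemma sec_meas:
  fixes \<Phi> :: "'p::topological_space \<times> 'k \<Rightarrow> complex"
  assumes "continuous_on UNIV \<Phi>"
  shows "(\<lambda>u. \<Phi> (p, u)) \<in> borel_measurable m"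
proof -
  have "continuous_on UNIV (\<lambda>u. \<Phi> (p, u))"
    by (rule continuous_on_compose2[OF assms]) (auto intro!: continuous_intros)
  then show ?thesis by (simp add: bm_m borel_measurable_continuous_onI)
qed

lemma J_cont:
  fixes \<Phi> :: "'p::t2_space \<times> 'k \<Rightarrow> complex" and \<tau> :: "'p \<Rightarrow> 'k"
  assumes K: "compact (UNIV :: 'k set)" and Pc: "continuous_on UNIV \<Phi>" and Pb: "\<And>z. cmod (\<Phi> z) \<le> 1"
    and tc: "continuous_on UNIV \<tau>" and f: "f \<in> L2 m" and g: "g \<in> L2 m"
  shows "continuous_on UNIV (\<lambda>p. \<integral>u. \<Phi> (p, u) * f (\<tau> p + u) * cnj (g u) \<partial>m)"
proof (intro continuous_at_imp_continuous_on ballI isCont_eps)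
  fix p0 :: 'p and e :: real
  assume e: "e > 0"
  have fm: "f \<in> borel_measurable m" and fi: "integrable m (\<lambda>x. (cmod (f x))\<^sup>2)"
    and gm: "g \<in> borel_measurable m" and gi: "integrable m (\<lambda>x. (cmod (g x))\<^sup>2)"
    using f g unfolding L2_def by auto
  define NF where "NF = (\<integral>x. (cmod (f x))\<^sup>2 \<partial>m)"
  define NG where "NG = (\<integral>x. (cmod (g x))\<^sup>2 \<partial>m)"
  have NF0: "NF \<ge> 0" and NG0: "NG \<ge> 0" unfolding NF_def NG_def by auto
  have fsm: "\<And>c. (\<lambda>u. f (c + u)) \<in> borel_measurable m" by (rule shift_fun_meas[OF fm])
  have fsq: "\<And>c. (\<lambda>u. (cmod (f (c + u)))\<^sup>2) \<in> borel_measurable m \<and> integrable m (\<lambda>u. (cmod (f (c + u)))\<^sup>2) \<and> (\<integral>u. (cmod (f (c + u)))\<^sup>2 \<partial>m) = NF"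
  proof -
    fix c
    have m2: "(\<lambda>x. (cmod (f x))\<^sup>2) \<in> borel_measurable m" by (rule sq_norm_meas[OF fm])
    show "?thesis c"
      using sq_norm_meas[OF fsm[of c]] integrable_shift[OF m2, of c] int_shift[OF m2, of c] fi
      unfolding NF_def by simp
  qed
  have Pm: "\<And>p. (\<lambda>u. \<Phi> (p, u)) \<in> borel_measurable m" by (rule sec_meas[OF Pc])
  define M0 where "M0 = NF + NG + 1"
  have M0: "M0 > 0" unfolding M0_def using NF0 NG0 by linarith
  define \<eta> where "\<eta> = e / (4 * M0)"
  have \<eta>: "\<eta> > 0" unfolding \<eta>_def using e M0 by simp
  obtain N1 where N1: "open N1" "p0 \<in> N1" "\<And>p u. p \<in> N1 \<Longrightarrow> dist (\<Phi> (p, u)) (\<Phi> (p0, u)) < \<eta>"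
    using tube_unif[OF K Pc \<eta>, of p0] by blast
  define t where "t = 4 * (NG + 1) / e"
  have t: "t > 0" unfolding t_def using e NG0 by (intro divide_pos_pos) auto
  define \<eta>2 where "\<eta>2 = e / (4 * t)"
  have \<eta>2: "\<eta>2 > 0" unfolding \<eta>2_def using e t by simp
  have cf: "cont2 m f" by (rule cont2_L2[OF fm fi])
  from cf[unfolded cont2_def, rule_format, OF \<eta>2] obtain W where
    W: "open W" "0 \<in> W" "\<And>w. w \<in> W \<Longrightarrow> (\<integral>v. (cmod (f (w+v) - f v))\<^sup>2 \<partial>m) < \<eta>2"
    by blast
  define N2 where "N2 = (\<lambda>p. \<tau> p + - \<tau> p0) -` W"
  have N2: "open N2" "p0 \<in> N2"
    unfolding N2_def using W by (auto intro!: open_vimage_UNIV continuous_intros tc)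
  let ?J = "\<lambda>p. \<integral>u. \<Phi> (p, u) * f (\<tau> p + u) * cnj (g u) \<partial>m"
  have "dist (?J p) (?J p0) < e" if p: "p \<in> N1 \<inter> N2" for p
  proof -
    let ?F = "\<lambda>u. f (\<tau> p + u)"
    let ?Fq = "\<lambda>u. f (\<tau> p0 + u)"
    let ?T1 = "\<lambda>u. (\<Phi> (p, u) - \<Phi> (p0, u)) * ?F u * cnj (g u)"
    let ?T2 = "\<lambda>u. \<Phi> (p0, u) * (?F u - ?Fq u) * cnj (g u)"
    have Fdm: "(\<lambda>u. ?F u - ?Fq u) \<in> borel_measurable m" by (intro borel_measurable_diff fsm)
    have Fdi: "integrable m (\<lambda>u. (cmod (?F u - ?Fq u))\<^sup>2)"
      by (rule diff_sq_int) (use fsm fsq in auto)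
    have I1: "integrable m (\<lambda>u. \<Phi> (p, u) * ?F u * cnj (g u))"
      by (rule prod_bound(1)[of "\<lambda>u. f (\<tau> p + u)" g "\<lambda>u. \<Phi> (p, u)" 1 1, OF fsm gm Pm _ gi Pb]) (use fsq in auto)
    have I0: "integrable m (\<lambda>u. \<Phi> (p0, u) * ?Fq u * cnj (g u))"
      by (rule prod_bound(1)[of "\<lambda>u. f (\<tau> p0 + u)" g "\<lambda>u. \<Phi> (p0, u)" 1 1, OF fsm gm Pm _ gi Pb]) (use fsq in auto)
    have Dm: "(\<lambda>u. \<Phi> (p, u) - \<Phi> (p0, u)) \<in> borel_measurable m" by (intro borel_measurable_diff Pm)
    have Db: "cmod (\<Phi> (p, u) - \<Phi> (p0, u)) \<le> \<eta>" for u
      using N1(3)[of p u] p by (simp add: dist_norm)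
    have IT1: "integrable m ?T1" and BT1: "cmod (integral\<^sup>L m ?T1) \<le> \<eta> * (1 * NF + NG / 1) / 2"
      using prod_bound[of "\<lambda>u. f (\<tau> p + u)" g "\<lambda>u. \<Phi> (p, u) - \<Phi> (p0, u)" \<eta> 1, OF fsm gm Dm _ gi Db] fsq unfolding NG_def by auto
    have IT2: "integrable m ?T2"
      and BT2: "cmod (integral\<^sup>L m ?T2) \<le> 1 * (t * (\<integral>u. (cmod (?F u - ?Fq u))\<^sup>2 \<partial>m) + NG / t) / 2"
      using prod_bound[of "\<lambda>u. ?F u - ?Fq u" g "\<lambda>u. \<Phi> (p0, u)" 1 t, OF Fdm gm Pm Fdi gi Pb t] unfolding NG_def by auto
    have shift: "(\<integral>u. (cmod (?F u - ?Fq u))\<^sup>2 \<partial>m) < \<eta>2"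
    proof -
      let ?w = "\<tau> p + - \<tau> p0"
      have w: "?w \<in> W" using p unfolding N2_def by auto
      let ?H = "\<lambda>v. (cmod (f (?w + v) - f v))\<^sup>2"
      have Hm: "?H \<in> borel_measurable m" by (intro sq_norm_meas borel_measurable_diff fsm fm)
      have "?F u - ?Fq u = f (?w + (\<tau> p0 + u)) - f (\<tau> p0 + u)" for u
      proof -
        have "?w + (\<tau> p0 + u) = \<tau> p + u" by (simp only: add.assoc minus_add_cancel)
        then show ?thesis by (simp only:)
      qed
      then have "(\<integral>u. (cmod (?F u - ?Fq u))\<^sup>2 \<partial>m) = (\<integral>u. ?H (\<tau> p0 + u) \<partial>m)" by simp
      also have "\<dots> = integral\<^sup>L m ?H" by (rule int_shift[OF Hm])
      also have "\<dots> < \<eta>2" by (rule W(3)[OF w])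
      finally show ?thesis .
    qed
    have "?J p - ?J p0 = (\<integral>u. \<Phi> (p, u) * ?F u * cnj (g u) - \<Phi> (p0, u) * ?Fq u * cnj (g u) \<partial>m)"
      using I1 I0 by simp
    also have "\<dots> = (\<integral>u. ?T1 u + ?T2 u \<partial>m)"
      by (rule Bochner_Integration.integral_cong) (simp_all add: algebra_simps)
    also have "\<dots> = integral\<^sup>L m ?T1 + integral\<^sup>L m ?T2"
      using IT1 IT2 by simp
    finally have eqJ: "?J p - ?J p0 = integral\<^sup>L m ?T1 + integral\<^sup>L m ?T2" .
    have b1: "\<eta> * (1 * NF + NG / 1) / 2 \<le> e / 4"
    proof -
      have a: "(1 * NF + NG / 1) / 2 \<le> M0" unfolding M0_def using NF0 NG0 by (simp add: field_simps)
      have "\<eta> * ((1 * NF + NG / 1) / 2) \<le> \<eta> * M0"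
        using \<eta> a by (intro mult_left_mono) auto
      then have "\<eta> * (1 * NF + NG / 1) / 2 \<le> \<eta> * M0" by simp
      also have "\<dots> = e / 4" unfolding \<eta>_def using M0 by simp
      finally show ?thesis .
    qed
    have b2: "1 * (t * (\<integral>u. (cmod (?F u - ?Fq u))\<^sup>2 \<partial>m) + NG / t) / 2 < e / 4"
    proof -
      have "t * (\<integral>u. (cmod (?F u - ?Fq u))\<^sup>2 \<partial>m) < t * \<eta>2"
        using shift t by simp
      also have "t * \<eta>2 = e / 4" unfolding \<eta>2_def using t by simp
      finally have a: "t * (\<integral>u. (cmod (?F u - ?Fq u))\<^sup>2 \<partial>m) < e / 4" .
      have "NG / t = NG * e / (4 * (NG + 1))" unfolding t_def using e NG0 by (simp add: field_simps)
      also have "\<dots> \<le> e / 4"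
        using e NG0 by (simp add: field_simps)
      finally show ?thesis using a by simp
    qed
    have "dist (?J p) (?J p0) = cmod (integral\<^sup>L m ?T1 + integral\<^sup>L m ?T2)"
      by (simp add: dist_norm eqJ)
    also have "\<dots> \<le> cmod (integral\<^sup>L m ?T1) + cmod (integral\<^sup>L m ?T2)" by (rule norm_triangle_ineq)
    also have "\<dots> < e" using BT1 BT2 b1 b2 e by linarith
    finally show ?thesis .
  qed
  then show "\<exists>N. open N \<and> p0 \<in> N \<and> (\<forall>p\<in>N. dist (?J p) (?J p0) < e)"
    using N1 N2 by (intro exI[of _ "N1 \<inter> N2"]) auto
qed

end

context haarK begin

lemma J_bound:
  fixes \<Psi> :: "'k \<Rightarrow> complex"
  assumes f: "f \<in> L2 m" and g: "g \<in> L2 m" and nf: "(\<integral>x. (cmod (f x))\<^sup>2 \<partial>m) \<le> 1"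
    and ng: "(\<integral>x. (cmod (g x))\<^sup>2 \<partial>m) \<le> 1"
    and Pm: "\<Psi> \<in> borel_measurable m" and Pb: "\<And>u. cmod (\<Psi> u) \<le> B"
  shows "integrable m (\<lambda>u. \<Psi> u * f (c + u) * cnj (g u))"
    and "cmod (\<integral>u. \<Psi> u * f (c + u) * cnj (g u) \<partial>m) \<le> B"
proof -
  have fm: "f \<in> borel_measurable m" and fi: "integrable m (\<lambda>x. (cmod (f x))\<^sup>2)"
    and gm: "g \<in> borel_measurable m" and gi: "integrable m (\<lambda>x. (cmod (g x))\<^sup>2)"
    using f g unfolding L2_def by auto
  have B0: "0 \<le> B" using Pb[of undefined] norm_ge_zero order_trans by blast
  have m2: "(\<lambda>x. (cmod (f x))\<^sup>2) \<in> borel_measurable m" by (rule sq_norm_meas[OF fm])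
  have fsm: "(\<lambda>u. f (c + u)) \<in> borel_measurable m" by (rule shift_fun_meas[OF fm])
  have fsi: "integrable m (\<lambda>u. (cmod (f (c + u)))\<^sup>2)"
    using integrable_shift[OF m2, of c] fi by simp
  have fsn: "(\<integral>u. (cmod (f (c + u)))\<^sup>2 \<partial>m) \<le> 1"
    using int_shift[OF m2, of c] nf by simp
  note pb = prod_bound[of "\<lambda>u. f (c + u)" g \<Psi> B 1, OF fsm gm Pm fsi gi Pb]
  show "integrable m (\<lambda>u. \<Psi> u * f (c + u) * cnj (g u))" using pb by simp
  have "cmod (\<integral>u. \<Psi> u * f (c + u) * cnj (g u) \<partial>m) \<le> B * (1 * (\<integral>u. (cmod (f (c + u)))\<^sup>2 \<partial>m) + (\<integral>u. (cmod (g u))\<^sup>2 \<partial>m) / 1) / 2"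
    using pb by simp
  also have "\<dots> \<le> B * 1"
  proof -
    have "(1 * (\<integral>u. (cmod (f (c + u)))\<^sup>2 \<partial>m) + (\<integral>u. (cmod (g u))\<^sup>2 \<partial>m) / 1) / 2 \<le> 1"
      using fsn ng by simp
    then have "B * ((1 * (\<integral>u. (cmod (f (c + u)))\<^sup>2 \<partial>m) + (\<integral>u. (cmod (g u))\<^sup>2 \<partial>m) / 1) / 2) \<le> B * 1"
      using B0 by (intro mult_left_mono) auto
    then show ?thesis by simp
  qed
  finally show "cmod (\<integral>u. \<Psi> u * f (c + u) * cnj (g u) \<partial>m) \<le> B" by simp
qed

end

lemma l2_norm_le1: "l2_norm m f \<le> 1 \<Longrightarrow> (\<integral>x. (cmod (f x))\<^sup>2 \<partial>m) \<le> 1"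
  unfolding l2_norm_def by simp

lemma dual_unit: "\<beta> \<in> dual_group \<Longrightarrow> \<beta> c * cnj (\<beta> c) = 1"
  unfolding dual_group_def using complex_norm_square[of "\<beta> c"] by auto

lemma dual_diff:
  assumes "\<beta> \<in> dual_group"
  shows "cmod (\<alpha> c - \<beta> c) = cmod (\<alpha> c * cnj (\<beta> c) - 1)"
proof -
  have "\<alpha> c - \<beta> c = (\<alpha> c * cnj (\<beta> c) - 1) * \<beta> c"
    using dual_unit[OF assms, of c] by (simp add: algebra_simps)
  moreover have "cmod (\<beta> c) = 1" using assms unfolding dual_group_def by auto
  ultimately show ?thesis by (simp add: norm_mult)
qed

lemma one_dual: "(\<lambda>a. 1) \<in> dual_group"
  unfolding dual_group_def by auto

lemma dual_open_ball:
  fixes C :: "'a::topological_ab_group_add set"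
  assumes C: "compact C" and d: "\<delta> > 0"
  shows "dual_open {\<gamma>\<in>dual_group. \<forall>c\<in>C. cmod (\<gamma> c - 1) < \<delta>}"
  unfolding dual_open_def
proof (intro conjI ballI)
  show "{\<gamma> \<in> dual_group. \<forall>c\<in>C. cmod (\<gamma> c - 1) < \<delta>} \<subseteq> dual_group" by auto
  fix \<alpha> assume a: "\<alpha> \<in> {\<gamma> \<in> dual_group. \<forall>c\<in>C. cmod (\<gamma> c - 1) < \<delta>}"
  show "\<exists>C' \<delta>'. compact C' \<and> \<delta>' > 0 \<and> {\<gamma> \<in> dual_group. \<forall>a\<in>C'. cmod (\<gamma> a - \<alpha> a) < \<delta>'} \<subseteq> {\<gamma> \<in> dual_group. \<forall>c\<in>C. cmod (\<gamma> c - 1) < \<delta>}"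
  proof (cases "C = {}")
    case True
    then show ?thesis by (intro exI[of _ C] exI[of _ 1]) (auto simp: C)
  next
    case False
    have ac: "continuous_on C (\<lambda>c. cmod (\<alpha> c - 1))"
      using a unfolding dual_group_def by (auto intro!: continuous_intros intro: continuous_on_subset)
    obtain c0 where c0: "c0 \<in> C" "\<And>c. c \<in> C \<Longrightarrow> cmod (\<alpha> c - 1) \<le> cmod (\<alpha> c0 - 1)"
      using continuous_attains_sup[OF C False ac] by blast
    define \<delta>' where "\<delta>' = \<delta> - cmod (\<alpha> c0 - 1)"
    have d': "\<delta>' > 0" unfolding \<delta>'_def using a c0 by auto
    have "{\<gamma> \<in> dual_group. \<forall>a\<in>C. cmod (\<gamma> a - \<alpha> a) < \<delta>'} \<subseteq> {\<gamma> \<in> dual_group. \<forall>c\<in>C. cmod (\<gamma> c - 1) < \<delta>}"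
    proof safe
      fix \<gamma> c assume g: "\<gamma> \<in> dual_group" "\<forall>a\<in>C. cmod (\<gamma> a - \<alpha> a) < \<delta>'" and c: "c \<in> C"
      have "cmod (\<gamma> c - 1) \<le> cmod (\<gamma> c - \<alpha> c) + cmod (\<alpha> c - 1)"
        using norm_triangle_ineq[of "\<gamma> c - \<alpha> c" "\<alpha> c - 1"] by simp
      then show "cmod (\<gamma> c - 1) < \<delta>" using g(2) c c0(2)[OF c] unfolding \<delta>'_def by fastforce
    qed
    then show ?thesis using C d' by blast
  qed
qed

theorem theorem3p3:
  fixes \<phi> :: "'k::{topological_group_add, t2_space} \<Rightarrow> 'a::{topological_ab_group_add, t2_space} \<Rightarrow> 'a"
    and m :: "'k measure"
    and \<nu> :: "('a \<times> 'k) measure"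
    and h :: "'a \<times> 'k \<Rightarrow> complex"
  assumes "locally_compact_space (euclidean :: 'a topology)"
    and "compact (UNIV :: 'k set)"
    and "motion_action \<phi>"
    and "haar_prob m"
    and "regular_action \<phi>"
    and "radon_fin \<nu>"
    and "h \<in> borel_measurable borel"
    and "\<forall>x. cmod (h x) \<le> 1"
  shows "\<forall>\<epsilon>>0. \<exists>V. dual_open V \<and> (\<lambda>a. 1) \<in> V \<and>
           (\<forall>\<alpha>\<in>dual_group. \<forall>\<beta>\<in>dual_group. (\<lambda>a. \<alpha> a * cnj (\<beta> a)) \<in> V \<longrightarrow>
              form_norm m (\<lambda>f g. ft_form \<phi> m \<nu> h \<alpha> f g - ft_form \<phi> m \<nu> h \<beta> f g) < \<epsilon>)"
proof (intro allI impI)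
  fix \<epsilon> :: real assume e: "\<epsilon> > 0"
  note K = assms(2) and Rn = assms(6) and hm = assms(7)
  have hb: "\<And>x. cmod (h x) \<le> 1" using assms(8) by blast
  interpret haarK m using assms(4) by unfold_locales
  interpret nu: finite_measure \<nu> using radon_basic(3)[OF Rn] .
  have sets_nu: "sets \<nu> = sets borel" and space_nu: "space \<nu> = UNIV" using radon_basic[OF Rn] by auto
  have phic: "continuous_on UNIV (\<lambda>p::'a \<times> 'k. \<phi> (snd p) (fst p))"
    using assms(3) unfolding motion_action_def by blast
  define cmap where "cmap = (\<lambda>z::('a \<times> 'k) \<times> 'k. \<phi> (- snd z) (- \<phi> (- snd (fst z)) (fst (fst z))))"
  have c1: "continuous_on UNIV (\<lambda>z::('a \<times> 'k) \<times> 'k. \<phi> (- snd (fst z)) (fst (fst z)))"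
  proof -
    have "continuous_on UNIV (\<lambda>z::('a \<times> 'k) \<times> 'k. (fst (fst z), - snd (fst z)))"
      by (intro continuous_intros)
    from continuous_on_compose2[OF phic this] show ?thesis by simp
  qed
  have cc: "continuous_on UNIV cmap"
  proof -
    have "continuous_on UNIV (\<lambda>z::('a \<times> 'k) \<times> 'k. (- \<phi> (- snd (fst z)) (fst (fst z)), - snd z))"
      by (intro continuous_intros c1)
    from continuous_on_compose2[OF phic this] show ?thesis unfolding cmap_def by simp
  qed
  have Phic: "continuous_on UNIV (\<lambda>z. \<alpha> (cmap z))" if "\<alpha> \<in> dual_group" for \<alpha> :: "'a \<Rightarrow> complex"
  proof -
    have "continuous_on UNIV \<alpha>" using that unfolding dual_group_def by auto
    from continuous_on_compose2[OF this cc] show ?thesis by simp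
  qed
  have Phib: "cmod (\<alpha> (cmap z)) = 1" if "\<alpha> \<in> dual_group" for \<alpha> :: "'a \<Rightarrow> complex" and z
    using that unfolding dual_group_def by auto
  have inner: "l2_inner m (Lambda \<phi> \<alpha> (sd_inv \<phi> x) f) g = (\<integral>u. \<alpha> (cmap (x, u)) * f (snd x + u) * cnj (g u) \<partial>m)"
    for \<alpha> x f g
    by (simp add: l2_inner_def Lambda_def dual_act_def sd_inv_def cmap_def)
  obtain C0 where C0: "compact C0" "measure \<nu> (UNIV - C0) < \<epsilon> / 8"
    using radon_inner[OF Rn, of UNIV "\<epsilon> / 8"] e by auto
  define C where "C = cmap ` (C0 \<times> UNIV)"
  have Cc: "compact C" unfolding C_def
    by (intro compact_continuous_image continuous_on_subset[OF cc] compact_Times C0(1) K) auto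
  define M where "M = measure \<nu> UNIV"
  have M0: "M \<ge> 0" unfolding M_def by simp
  define \<delta> where "\<delta> = \<epsilon> / (4 * (M + 1))"
  have d: "\<delta> > 0" unfolding \<delta>_def using e M0 by (intro divide_pos_pos) auto
  have dM: "\<delta> * M \<le> \<epsilon> / 4"
  proof -
    have "\<delta> * M = (\<epsilon> / 4) * (M / (M + 1))" unfolding \<delta>_def by (simp add: field_simps)
    also have "\<dots> \<le> (\<epsilon> / 4) * 1" using e M0 by (intro mult_left_mono) auto
    finally show ?thesis by simp
  qed
  define V where "V = {\<gamma>\<in>dual_group. \<forall>c\<in>C. cmod (\<gamma> c - 1) < \<delta>}"
  have "dual_open V" unfolding V_def by (rule dual_open_ball[OF Cc d])
  moreover have "(\<lambda>a. 1) \<in> V" unfolding V_def using one_dual d by auto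
  moreover have "form_norm m (\<lambda>f g. ft_form \<phi> m \<nu> h \<alpha> f g - ft_form \<phi> m \<nu> h \<beta> f g) < \<epsilon>"
    if a: "\<alpha> \<in> dual_group" and b: "\<beta> \<in> dual_group" and ab: "(\<lambda>a. \<alpha> a * cnj (\<beta> a)) \<in> V" for \<alpha> \<beta>
  proof -
    have abC: "cmod (\<alpha> c - \<beta> c) < \<delta>" if "c \<in> C" for c
      using ab that dual_diff[OF b, of \<alpha> c] unfolding V_def by auto
    let ?S = "{(f, g). f \<in> L2 m \<and> g \<in> L2 m \<and> l2_norm m f \<le> 1 \<and> l2_norm m g \<le> 1}"
    have bound: "cmod (ft_form \<phi> m \<nu> h \<alpha> f g - ft_form \<phi> m \<nu> h \<beta> f g) \<le> \<epsilon> / 2"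
      if fg: "(f, g) \<in> ?S" for f g
    proof -
      have f: "f \<in> L2 m" and g: "g \<in> L2 m" and nf: "(\<integral>x. (cmod (f x))\<^sup>2 \<partial>m) \<le> 1"
        and ng: "(\<integral>x. (cmod (g x))\<^sup>2 \<partial>m) \<le> 1"
        using fg l2_norm_le1 by auto
      define J where "J \<gamma> x = (\<integral>u. \<gamma> (cmap (x, u)) * f (snd x + u) * cnj (g u) \<partial>m)" for \<gamma> x
      have Jc: "continuous_on UNIV (J \<gamma>)" if "\<gamma> \<in> dual_group" for \<gamma>
        unfolding J_def
        by (rule J_cont[OF K _ _ continuous_on_snd[OF continuous_on_id] f g, of "\<lambda>z. \<gamma> (cmap z)", simplified])
           (use Phic[OF that] Phib[OF that] in auto)
      have Jm: "J \<gamma> \<in> borel_measurable \<nu>" if "\<gamma> \<in> dual_group" for \<gamma>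
        using borel_measurable_continuous_onI[OF Jc[OF that]]
        by (simp add: measurable_cong_sets[OF sets_nu refl])
      have Pm: "(\<lambda>u. \<gamma> (cmap (x, u))) \<in> borel_measurable m" if "\<gamma> \<in> dual_group" for \<gamma> x
        using sec_meas[OF Phic[OF that], of x] by simp
      have Jint: "integrable m (\<lambda>u. \<gamma> (cmap (x, u)) * f (snd x + u) * cnj (g u))"
        and Jb: "cmod (J \<gamma> x) \<le> 1" if "\<gamma> \<in> dual_group" for \<gamma> x
        using J_bound[OF f g nf ng Pm[OF that, of x], of 1 "snd x"] Phib[OF that] unfolding J_def by auto
      have hJi: "integrable \<nu> (\<lambda>x. h x * J \<gamma> x)" if "\<gamma> \<in> dual_group" for \<gamma>
      proof (rule nu.integrable_const_bound[where B=1])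
        show "AE x in \<nu>. norm (h x * J \<gamma> x) \<le> 1"
        proof (intro AE_I2)
          fix x
          have "cmod (h x) * cmod (J \<gamma> x) \<le> 1 * 1"
            using hb[of x] Jb[OF that, of x] by (intro mult_mono) auto
          then show "norm (h x * J \<gamma> x) \<le> 1" by (simp add: norm_mult)
        qed
        have "h \<in> borel_measurable \<nu>" using hm by (simp add: measurable_cong_sets[OF sets_nu refl])
        then show "(\<lambda>x. h x * J \<gamma> x) \<in> borel_measurable \<nu>" using Jm[OF that] by (intro borel_measurable_times)
      qed
      have ft: "ft_form \<phi> m \<nu> h \<gamma> f g = (\<integral>x. h x * J \<gamma> x \<partial>\<nu>)" for \<gamma>
        unfolding ft_form_def inner J_def by simp
      have Dbound: "cmod (J \<alpha> x - J \<beta> x) \<le> \<delta> + 2 * indicator (UNIV - C0) x" for x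
      proof (cases "x \<in> C0")
        case True
        have "J \<alpha> x - J \<beta> x = (\<integral>u. (\<alpha> (cmap (x, u)) - \<beta> (cmap (x, u))) * f (snd x + u) * cnj (g u) \<partial>m)"
        proof -
          have "J \<alpha> x - J \<beta> x = (\<integral>u. \<alpha> (cmap (x, u)) * f (snd x + u) * cnj (g u) - \<beta> (cmap (x, u)) * f (snd x + u) * cnj (g u) \<partial>m)"
            unfolding J_def using Jint[OF a, of x] Jint[OF b, of x] by simp
          also have "\<dots> = (\<integral>u. (\<alpha> (cmap (x, u)) - \<beta> (cmap (x, u))) * f (snd x + u) * cnj (g u) \<partial>m)"
            by (rule Bochner_Integration.integral_cong) (simp_all add: algebra_simps)
          finally show ?thesis .
        qed
        also have "cmod \<dots> \<le> \<delta>"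
        proof (rule J_bound(2)[OF f g nf ng])
          show "(\<lambda>u. \<alpha> (cmap (x, u)) - \<beta> (cmap (x, u))) \<in> borel_measurable m"
            using Pm[OF a, of x] Pm[OF b, of x] by (intro borel_measurable_diff)
          fix u
          have "cmap (x, u) \<in> C" unfolding C_def using True by auto
          then show "cmod (\<alpha> (cmap (x, u)) - \<beta> (cmap (x, u))) \<le> \<delta>" using abC by (simp add: less_imp_le)
        qed
        finally have "cmod (J \<alpha> x - J \<beta> x) \<le> \<delta>" .
        moreover have "0 \<le> 2 * (indicator (UNIV - C0) x :: real)" by simp
        ultimately show ?thesis by linarith
      next
        case False
        have "cmod (J \<alpha> x - J \<beta> x) \<le> cmod (J \<alpha> x) + cmod (J \<beta> x)" by (rule norm_triangle_ineq4)
        also have "\<dots> \<le> 2" using Jb[OF a, of x] Jb[OF b, of x] by simp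
        finally show ?thesis using False d by simp
      qed
      have "ft_form \<phi> m \<nu> h \<alpha> f g - ft_form \<phi> m \<nu> h \<beta> f g = (\<integral>x. h x * J \<alpha> x - h x * J \<beta> x \<partial>\<nu>)"
        unfolding ft using hJi[OF a] hJi[OF b] by simp
      then have "cmod (ft_form \<phi> m \<nu> h \<alpha> f g - ft_form \<phi> m \<nu> h \<beta> f g) \<le> (\<integral>x. cmod (h x * J \<alpha> x - h x * J \<beta> x) \<partial>\<nu>)"
        by (simp add: integral_norm_bound)
      also have "\<dots> \<le> (\<integral>x. \<delta> + 2 * indicator (UNIV - C0) x \<partial>\<nu>)"
      proof (rule integral_mono')
        show "integrable \<nu> (\<lambda>x. \<delta> + 2 * indicator (UNIV - C0) x)"
        proof -
          have "UNIV - C0 \<in> sets \<nu>" using C0(1) sets_nu by (simp add: compact_imp_closed borel_closed)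
          then show ?thesis by (intro Bochner_Integration.integrable_add nu.integrable_const integrable_mult_right integrable_real_indicator) (auto simp: nu.emeasure_finite less_top[symmetric])
        qed
        fix x
        have "cmod (h x * J \<alpha> x - h x * J \<beta> x) = cmod (h x) * cmod (J \<alpha> x - J \<beta> x)"
          by (simp add: norm_mult right_diff_distrib[symmetric])
        also have "\<dots> \<le> 1 * cmod (J \<alpha> x - J \<beta> x)" using hb[of x] by (intro mult_right_mono) auto
        finally show "cmod (h x * J \<alpha> x - h x * J \<beta> x) \<le> \<delta> + 2 * indicator (UNIV - C0) x"
          using Dbound[of x] by simp
        show "0 \<le> \<delta> + 2 * indicator (UNIV - C0) x" using d by simp
      qed
      also have "\<dots> = \<delta> * M + 2 * measure \<nu> (UNIV - C0)"
      proof -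
        have s: "UNIV - C0 \<in> sets \<nu>" using C0(1) sets_nu by (simp add: compact_imp_closed borel_closed)
        have "(\<integral>x. \<delta> + 2 * indicator (UNIV - C0) x \<partial>\<nu>) = (\<integral>x. \<delta> \<partial>\<nu>) + (\<integral>x. 2 * indicator (UNIV - C0) x \<partial>\<nu>)"
          using s by (intro Bochner_Integration.integral_add nu.integrable_const integrable_mult_right integrable_real_indicator) (auto simp: nu.emeasure_finite less_top[symmetric])
        also have "\<dots> = \<delta> * M + 2 * measure \<nu> (UNIV - C0)"
          unfolding M_def using space_nu by simp
        finally show ?thesis .
      qed
      also have "\<dots> \<le> \<epsilon> / 2" using dM C0(2) by linarith
      finally show ?thesis .
    qed
    have ne: "?S \<noteq> {}"
    proof -
      have "(\<lambda>x. 0::complex) \<in> L2 m" unfolding L2_def by simp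
      moreover have "l2_norm m (\<lambda>x. 0::complex) \<le> 1" unfolding l2_norm_def by simp
      ultimately have "((\<lambda>x. 0::complex), (\<lambda>x. 0::complex)) \<in> ?S" by simp
      then show ?thesis by blast
    qed
    have "form_norm m (\<lambda>f g. ft_form \<phi> m \<nu> h \<alpha> f g - ft_form \<phi> m \<nu> h \<beta> f g) \<le> \<epsilon> / 2"
      unfolding form_norm_def
    proof (rule cSUP_least[OF ne])
      fix p assume "p \<in> ?S"
      then show "cmod (ft_form \<phi> m \<nu> h \<alpha> (fst p) (snd p) - ft_form \<phi> m \<nu> h \<beta> (fst p) (snd p)) \<le> \<epsilon> / 2"
        using bound[of "fst p" "snd p"] by simp
    qed
    then show ?thesis using e by linarith
  qed
  ultimately show "\<exists>V. dual_open V \<and> (\<lambda>a. 1) \<in> V \<and>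
           (\<forall>\<alpha>\<in>dual_group. \<forall>\<beta>\<in>dual_group. (\<lambda>a. \<alpha> a * cnj (\<beta> a)) \<in> V \<longrightarrow>
              form_norm m (\<lambda>f g. ft_form \<phi> m \<nu> h \<alpha> f g - ft_form \<phi> m \<nu> h \<beta> f g) < \<epsilon>)"
    by blast
qed

end
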